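(* Let $G=\langle S_k\mid K\rangle$ be a finitely generated semigroup as described in the context, with $K$ primitive, and let $\lambda$ be the largest (Perron) eigenvalue of $K$. For $m\ge0$ and $1\le i,j\le k$: (i) the limit $\lim_{n\to\infty}|\bar{\Delta}^{(s_j)}_n|/|\bar{\Delta}^{(s_i)}_{n+m+1}|$ exists and is positive, and $\sum_{l=1}^k\lim_{n\to\infty}K^{m+1}(s_i,s_l)|\bar{\Delta}^{(s_l)}_n|/|\bar{\Delta}^{(s_i)}_{n+m+1}|=1$; (ii) there exists $\gamma>0$ such that for all $r\ge0$, \[\lim_{q\to\infty}\frac{\sum_{l=0}^{q-1}K^{r+l(m+1)+1}(s_i,s_j)}{|\bar{\Delta}^{(s_i)}_{q(m+1)+r}|}=\frac{\gamma}{\lambda^{m+1}-1};\] (iii) for all $r\ge0$, \[\sum_{j=1}^k\lim_{q\to\infty}\frac{\sum_{l=0}^{q-1}K^{r+l(m+1)+1}(s_i,s_j)\,|\bar{\Delta}^{(s_j)}_m|}{|\bar{\Delta}^{(s_i)}_{q(m+1)+r}|}=1.\]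
   Context: Let $K$ be a $k\times k$ matrix with entries in $\{0,1\}$ indexed by $S_k=\{s_1,\dots,s_k\}$, and let $G=\langle S_k\mid K\rangle$ be the semigroup generated by $S_k$ subject to the relations $s_is_j=1_G$ if and only if $K(s_i,s_j)=0$ ($1_G$ the identity). Every $g\in G$ has a unique minimal representation $g=g_1g_2\cdots g_n$ with $g_l\in S_k$ and $K(g_l,g_{l+1})=1$; its length is $|g|=n$ (with $|1_G|=0$). For $g\in G$ and $n\ge0$ the $n$-semiball at $g$ is $\bar{\Delta}^{(g)}_n=\{gh: h\in G,\ |h|\le n,\ |gh|=|g|+|h|\}$. $K^l(s_i,s_j)$ is the $(s_i,s_j)$ entry of $K^l$. A nonnegative square matrix is primitive if some power of it has all entries positive. *)

theory Defs
  imports Complex_Main "Jordan_Normal_Form.Char_Poly"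
begin

text \<open>Generators s_1,...,s_k are represented by indices 0,...,k-1; the k x k
  0/1 matrix K is a real matrix. Elements of G are identified with their unique
  minimal representations, i.e. K-admissible words.\<close>

definition admissible :: "real mat \<Rightarrow> nat list \<Rightarrow> bool" where
  "admissible K w \<longleftrightarrow> set w \<subseteq> {0..<dim_row K} \<and>
     (\<forall>l. Suc l < length w \<longrightarrow> K $$ (w ! l, w ! Suc l) = 1)"

text \<open>Length |g| of an element is the length of its minimal representation.
  The n-semiball at g: all gh with |h| \<le> n and |gh| = |g| + |h|, i.e. whose
  minimal representation is the concatenation of those of g and h.\<close>

definition semiball :: "real mat \<Rightarrow> nat list \<Rightarrow> nat \<Rightarrow> nat list set" where
  "semiball K g n = {g @ h | h. length h \<le> n \<and> admissible K (g @ h)}"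

definition primitive_mat :: "real mat \<Rightarrow> bool" where
  "primitive_mat A \<longleftrightarrow> (\<forall>i<dim_row A. \<forall>j<dim_col A. A $$ (i,j) \<ge> 0) \<and>
     (\<exists>p. \<forall>i<dim_row A. \<forall>j<dim_col A. (A ^\<^sub>m p) $$ (i,j) > 0)"

definition perron_eigenvalue :: "real mat \<Rightarrow> real" where
  "perron_eigenvalue A = Max {x. eigenvalue A x}"

end

theory Submission
  imports Defs
begin


fun Pw :: "(nat \<Rightarrow> nat \<Rightarrow> real) \<Rightarrow> nat \<Rightarrow> nat \<Rightarrow> nat \<Rightarrow> nat \<Rightarrow> real" where
  "Pw A k 0 i j = (if i = j then 1 else 0)"
| "Pw A k (Suc n) i j = (\<Sum>l<k. Pw A k n i l * A l j)"

lemma Pw_add: "j < k \<Longrightarrow> Pw A k (a + b) i j = (\<Sum>l<k. Pw A k a i l * Pw A k b l j)"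
proof (induction b arbitrary: j)
  case 0
  then show ?case by (simp add: if_distrib cong: if_cong)
next
  case (Suc b)
  have "Pw A k (a + Suc b) i j = (\<Sum>l'<k. Pw A k (a+b) i l' * A l' j)" by simp
  also have "\<dots> = (\<Sum>l'<k. (\<Sum>l<k. Pw A k a i l * Pw A k b l l') * A l' j)"
    using Suc.IH by simp
  also have "\<dots> = (\<Sum>l'<k. \<Sum>l<k. Pw A k a i l * (Pw A k b l l' * A l' j))"
    by (simp add: sum_distrib_right mult.assoc)
  also have "\<dots> = (\<Sum>l<k. \<Sum>l'<k. Pw A k a i l * (Pw A k b l l' * A l' j))"
    by (rule sum.swap)
  also have "\<dots> = (\<Sum>l<k. Pw A k a i l * (\<Sum>l'<k. Pw A k b l l' * A l' j))"
    by (simp add: sum_distrib_left)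
  finally show ?case by simp
qed

lemma Pw_one: "i < k \<Longrightarrow> Pw A k (Suc 0) i j = A i j"
proof -
  assume "i < k"
  have "Pw A k (Suc 0) i j = (\<Sum>l<k. (if i = l then 1 else 0) * A l j)" by simp
  also have "\<dots> = (\<Sum>l<k. if i = l then A l j else 0)" by (rule sum.cong) auto
  also have "\<dots> = A i j" using \<open>i < k\<close> by simp
  finally show ?thesis .
qed

lemma Pw_Suc_left: "i < k \<Longrightarrow> j < k \<Longrightarrow> Pw A k (Suc n) i j = (\<Sum>l<k. A i l * Pw A k n l j)"
proof -
  assume a: "i < k" "j < k"
  have "Pw A k (Suc n) i j = Pw A k (Suc 0 + n) i j" by simp
  also have "\<dots> = (\<Sum>l<k. Pw A k (Suc 0) i l * Pw A k n l j)" by (rule Pw_add[OF a(2)])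
  also have "\<dots> = (\<Sum>l<k. A i l * Pw A k n l j)" using Pw_one[OF a(1)] by simp
  finally show ?thesis .
qed

lemma Pw_transpose: "i < k \<Longrightarrow> j < k \<Longrightarrow> Pw (\<lambda>a b. A b a) k n i j = Pw A k n j i"
proof (induction n arbitrary: i j)
  case 0 then show ?case by auto
next
  case (Suc n)
  have "Pw (\<lambda>a b. A b a) k (Suc n) i j = (\<Sum>l<k. Pw (\<lambda>a b. A b a) k n i l * A j l)" by simp
  also have "\<dots> = (\<Sum>l<k. A j l * Pw A k n l i)"
    by (rule sum.cong) (use Suc.IH Suc.prems in auto)
  also have "\<dots> = Pw A k (Suc n) j i" by (rule Pw_Suc_left[symmetric]) (use Suc.prems in auto)
  finally show ?case .
qed

lemma Pw_nonneg: "\<forall>a<k. \<forall>b<k. A a b \<ge> 0 \<Longrightarrow> i < k \<Longrightarrow> j < k \<Longrightarrow> Pw A k n i j \<ge> 0"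
  by (induction n arbitrary: j) (auto intro!: sum_nonneg)

lemma Pw_mat: assumes "K \<in> carrier_mat k k" "i < k" "j < k"
  shows "(K ^\<^sub>m n) $$ (i,j) = Pw (\<lambda>a b. K $$ (a,b)) k n i j"
  using assms(2,3)
proof (induction n arbitrary: j)
  case 0 then show ?case using assms by auto
next
  case (Suc n)
  have "(K ^\<^sub>m Suc n) $$ (i,j) = row (K ^\<^sub>m n) i \<bullet> col K j"
    using assms Suc by simp
  also have "\<dots> = (\<Sum>l<k. (K ^\<^sub>m n) $$ (i,l) * K $$ (l,j))"
    using assms Suc unfolding scalar_prod_def by (auto intro!: sum.cong simp: lessThan_atLeast0)
  finally show ?case using Suc by simp
qed



lemma admissible_snoc:
  "admissible K (w @ [b]) \<longleftrightarrow> admissible K w \<and> b < dim_row K \<and> (w \<noteq> [] \<longrightarrow> K $$ (last w, b) = 1)"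
proof -
  have A: "(\<forall>l. Suc l < length (w @ [b]) \<longrightarrow> K $$ ((w @ [b]) ! l, (w @ [b]) ! Suc l) = 1) \<longleftrightarrow>
    (\<forall>l. Suc l < length w \<longrightarrow> K $$ (w ! l, w ! Suc l) = 1) \<and> (w \<noteq> [] \<longrightarrow> K $$ (last w, b) = 1)"
  proof (intro iffI conjI allI impI)
    fix l assume H: "\<forall>l. Suc l < length (w @ [b]) \<longrightarrow> K $$ ((w @ [b]) ! l, (w @ [b]) ! Suc l) = 1"
      and l: "Suc l < length w"
    then show "K $$ (w ! l, w ! Suc l) = 1" using H[rule_format, of l] by (simp add: nth_append)
  next
    assume H: "\<forall>l. Suc l < length (w @ [b]) \<longrightarrow> K $$ ((w @ [b]) ! l, (w @ [b]) ! Suc l) = 1"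
      and w: "w \<noteq> []"
    then show "K $$ (last w, b) = 1" using H[rule_format, of "length w - 1"]
      by (simp add: nth_append last_conv_nth)
  next
    fix l assume H: "(\<forall>l. Suc l < length w \<longrightarrow> K $$ (w ! l, w ! Suc l) = 1) \<and> (w \<noteq> [] \<longrightarrow> K $$ (last w, b) = 1)"
      and l: "Suc l < length (w @ [b])"
    show "K $$ ((w @ [b]) ! l, (w @ [b]) ! Suc l) = 1"
    proof (cases "Suc l < length w")
      case True then show ?thesis using H by (simp add: nth_append)
    next
      case False
      then have "Suc l = length w" using l by simp
      then have "l = length w - 1" "w \<noteq> []" by auto
      then show ?thesis using H by (auto simp: nth_append last_conv_nth)
    qed
  qed
  show ?thesis unfolding admissible_def A by auto
qed

definition W :: "real mat \<Rightarrow> nat \<Rightarrow> nat \<Rightarrow> nat \<Rightarrow> nat list set" where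
  "W K t a b = {h. length h = t \<and> admissible K (a # h) \<and> last (a # h) = b}"

lemma W_count:
  assumes K: "K \<in> carrier_mat k k" and K01: "\<forall>a<k. \<forall>b<k. K $$ (a,b) \<in> {0,1}"
    and a: "a < k"
  shows "b < k \<Longrightarrow> finite (W K t a b) \<and> real (card (W K t a b)) = Pw (\<lambda>a b. K $$ (a,b)) k t a b"
proof (induction t arbitrary: b)
  case 0
  have "W K 0 a b = (if a = b then {[]} else {})"
    using a K by (auto simp: W_def admissible_def)
  then show ?case by simp
next
  case (Suc t)
  define S where "S = {c \<in> {..<k}. K $$ (c,b) = 1}"
  have eq: "W K (Suc t) a b = (\<lambda>(c,h). h @ [b]) ` (SIGMA c:S. W K t a c)"
  proof
    show "W K (Suc t) a b \<subseteq> (\<lambda>(c,h). h @ [b]) ` (SIGMA c:S. W K t a c)"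
    proof
      fix h assume h: "h \<in> W K (Suc t) a b"
      then have "h \<noteq> []" by (auto simp: W_def)
      then obtain h' b' where hh: "h = h' @ [b']" by (metis rev_exhaust)
      have b': "b' = b" using h hh by (auto simp: W_def)
      have adm: "admissible K ((a # h') @ [b])" using h hh b' by (auto simp: W_def)
      then have adm': "admissible K (a # h')" and kk: "K $$ (last (a # h'), b) = 1"
        using admissible_snoc[of K "a # h'" b] by auto
      have "last (a # h') \<in> set (a # h')" by (rule last_in_set) simp
      then have "last (a # h') < k" using adm' K unfolding admissible_def by auto
      then have "last (a # h') \<in> S" using kk by (auto simp: S_def)
      moreover have "h' \<in> W K t a (last (a # h'))" using h hh adm' by (auto simp: W_def)
      ultimately show "h \<in> (\<lambda>(c,h). h @ [b]) ` (SIGMA c:S. W K t a c)"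
        using hh b' by force
    qed
  next
    show "(\<lambda>(c,h). h @ [b]) ` (SIGMA c:S. W K t a c) \<subseteq> W K (Suc t) a b"
    proof
      fix x assume "x \<in> (\<lambda>(c,h). h @ [b]) ` (SIGMA c:S. W K t a c)"
      then obtain c h where c: "c \<in> S" and h: "h \<in> W K t a c" and x: "x = h @ [b]" by auto
      have "admissible K ((a # h) @ [b])"
        using admissible_snoc[of K "a # h" b] c h K Suc.prems by (auto simp: W_def S_def)
      then show "x \<in> W K (Suc t) a b" using x h by (auto simp: W_def)
    qed
  qed
  have inj: "inj_on (\<lambda>(c,h). h @ [b]) (SIGMA c:S. W K t a c)"
    by (auto simp: inj_on_def W_def)
  have finS: "finite S" by (auto simp: S_def)
  have fin: "\<forall>c\<in>S. finite (W K t a c)" using Suc.IH by (auto simp: S_def)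
  have "real (card (W K (Suc t) a b)) = real (card (SIGMA c:S. W K t a c))"
    unfolding eq using card_image[OF inj] by simp
  also have "\<dots> = (\<Sum>c\<in>S. real (card (W K t a c)))"
    using card_SigmaI[OF finS fin] by simp
  also have "\<dots> = (\<Sum>c\<in>S. Pw (\<lambda>a b. K $$ (a,b)) k t a c)"
    using Suc.IH by (auto simp: S_def intro!: sum.cong)
  also have "\<dots> = (\<Sum>c<k. if K $$ (c,b) = 1 then Pw (\<lambda>a b. K $$ (a,b)) k t a c else 0)"
    unfolding S_def by (rule sum.inter_filter) simp
  also have "\<dots> = (\<Sum>c<k. Pw (\<lambda>a b. K $$ (a,b)) k t a c * K $$ (c,b))"
  proof (rule sum.cong)
    fix c assume "c \<in> {..<k}"
    then have "K $$ (c,b) \<in> {0,1}" using K01 Suc.prems by auto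
    then show "(if K $$ (c,b) = 1 then Pw (\<lambda>a b. K $$ (a,b)) k t a c else 0) =
      Pw (\<lambda>a b. K $$ (a,b)) k t a c * K $$ (c,b)" by auto
  qed simp
  finally show ?case using eq finS fin by simp
qed

lemma semiball_count:
  assumes K: "K \<in> carrier_mat k k" and K01: "\<forall>a<k. \<forall>b<k. K $$ (a,b) \<in> {0,1}"
    and a: "a < k"
  shows "real (card (semiball K [a] n)) = (\<Sum>t\<le>n. \<Sum>b<k. Pw (\<lambda>a b. K $$ (a,b)) k t a b)"
proof -
  have eq: "semiball K [a] n = (\<lambda>h. a # h) ` (\<Union>t\<in>{..n}. \<Union>b\<in>{..<k}. W K t a b)"
  proof
    show "semiball K [a] n \<subseteq> (\<lambda>h. a # h) ` (\<Union>t\<in>{..n}. \<Union>b\<in>{..<k}. W K t a b)"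
    proof
      fix x assume "x \<in> semiball K [a] n"
      then obtain h where x: "x = a # h" and h: "length h \<le> n" "admissible K (a # h)"
        by (auto simp: semiball_def)
      have "last (a # h) \<in> set (a # h)" by (rule last_in_set) simp
      then have "last (a # h) < k" using h K unfolding admissible_def by auto
      then have "h \<in> W K (length h) a (last (a # h))" "last (a # h) \<in> {..<k}" "length h \<in> {..n}"
        using h by (auto simp: W_def)
      then show "x \<in> (\<lambda>h. a # h) ` (\<Union>t\<in>{..n}. \<Union>b\<in>{..<k}. W K t a b)" using x by blast
    qed
  next
    show "(\<lambda>h. a # h) ` (\<Union>t\<in>{..n}. \<Union>b\<in>{..<k}. W K t a b) \<subseteq> semiball K [a] n"
      by (auto simp: semiball_def W_def)
  qed
  have fin: "\<And>t b. b < k \<Longrightarrow> finite (W K t a b)" using W_count[OF K K01 a] by blast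
  have c1: "\<And>t. card (\<Union>b\<in>{..<k}. W K t a b) = (\<Sum>b<k. card (W K t a b))"
    apply (rule card_UN_disjoint) apply simp apply (simp add: fin) apply (auto simp: W_def) done
  have c2: "card (\<Union>t\<in>{..n}. \<Union>b\<in>{..<k}. W K t a b) = (\<Sum>t\<le>n. card (\<Union>b\<in>{..<k}. W K t a b))"
    apply (rule card_UN_disjoint) apply simp apply (simp add: fin) apply (auto simp: W_def) done
  have "card (semiball K [a] n) = card (\<Union>t\<in>{..n}. \<Union>b\<in>{..<k}. W K t a b)"
    unfolding eq by (rule card_image) simp
  also have "\<dots> = (\<Sum>t\<le>n. \<Sum>b<k. card (W K t a b))" using c1 c2 by simp
  finally have "real (card (semiball K [a] n)) = (\<Sum>t\<le>n. \<Sum>b<k. real (card (W K t a b)))"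
    by simp
  also have "\<dots> = (\<Sum>t\<le>n. \<Sum>b<k. Pw (\<lambda>a b. K $$ (a,b)) k t a b)"
    using W_count[OF K K01 a] by simp
  finally show ?thesis .
qed



lemma abs_tendsto_zero_comp:
  fixes f g :: "nat \<Rightarrow> real"
  assumes "g \<longlonglongrightarrow> 0" "\<forall>n. \<bar>f n\<bar> \<le> g n"
  shows "f \<longlonglongrightarrow> 0"
proof -
  have "(\<lambda>n. \<bar>f n\<bar>) \<longlonglongrightarrow> 0"
    by (rule tendsto_sandwich[of "\<lambda>n. 0" _ _ g]) (use assms in auto)
  then show ?thesis by (rule tendsto_rabs_zero_cancel)
qed

lemma lin_rec_lim:
  fixes S \<alpha> \<beta> :: "nat \<Rightarrow> real"
  assumes rec: "\<forall>n. S (Suc n) = \<alpha> n * S n + \<beta> n"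
    and al: "\<alpha> \<longlonglongrightarrow> a0" and be: "\<beta> \<longlonglongrightarrow> b0" and a0: "\<bar>a0\<bar> < 1"
  shows "S \<longlonglongrightarrow> b0 / (1 - a0)"
proof -
  define L where "L = b0 / (1 - a0)"
  have L: "a0 * L + b0 = L" using a0 unfolding L_def by (auto simp: field_simps)
  define E where "E n = S n - L" for n
  define eps where "eps n = (\<alpha> n - a0) * L + (\<beta> n - b0)" for n
  have Erec: "E (Suc n) = \<alpha> n * E n + eps n" for n
    unfolding E_def eps_def rec[rule_format] using L by (simp add: algebra_simps)
  have eps0: "eps \<longlonglongrightarrow> 0"
  proof -
    have "(\<lambda>n. (\<alpha> n - a0) * L + (\<beta> n - b0)) \<longlonglongrightarrow> (a0 - a0) * L + (b0 - b0)"
      by (intro tendsto_intros al be)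
    then show ?thesis unfolding eps_def by simp
  qed
  define th where "th = (1 + \<bar>a0\<bar>) / 2"
  have th: "0 \<le> th" "th < 1" "\<bar>a0\<bar> < th" using a0 by (auto simp: th_def)
  have "eventually (\<lambda>n. dist (\<alpha> n) a0 < th - \<bar>a0\<bar>) sequentially"
    using al th(3) by (auto simp: tendsto_iff)
  then obtain N0 where N0': "\<And>n. n \<ge> N0 \<Longrightarrow> \<bar>\<alpha> n - a0\<bar> < th - \<bar>a0\<bar>"
    unfolding eventually_sequentially dist_real_def by blast
  have N0: "\<bar>\<alpha> n\<bar> \<le> th" if "n \<ge> N0" for n
    using N0'[OF that] by arith
  show ?thesis unfolding L_def[symmetric]
  proof (subst LIMSEQ_iff, intro allI impI)
    fix e :: real assume e: "e > 0"
    have "(1 - th) * e / 2 > 0" using e th by auto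
    then have "\<exists>no. \<forall>n\<ge>no. norm (eps n - 0) < (1 - th) * e / 2"
      using eps0 unfolding LIMSEQ_iff by blast
    then obtain N1 where N1: "\<And>n. n \<ge> N1 \<Longrightarrow> \<bar>eps n\<bar> < (1 - th) * e / 2"
      by auto
    define N where "N = max N0 N1"
    have bound: "\<bar>E n\<bar> \<le> e / 2 + th ^ (n - N) * \<bar>E N\<bar>" if "n \<ge> N" for n
      using that
    proof (induction n rule: dec_induct)
      case base then show ?case using e by simp
    next
      case (step n)
      have "\<bar>E (Suc n)\<bar> \<le> \<bar>\<alpha> n\<bar> * \<bar>E n\<bar> + \<bar>eps n\<bar>"
        unfolding Erec by (metis abs_mult abs_triangle_ineq)
      also have "\<dots> \<le> th * \<bar>E n\<bar> + (1 - th) * e / 2"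
        using N0[of n] N1[of n] step.hyps unfolding N_def
        by (intro add_mono mult_right_mono) auto
      also have "\<dots> \<le> th * (e / 2 + th ^ (n - N) * \<bar>E N\<bar>) + (1 - th) * e / 2"
        using step.IH th by (intro add_mono mult_left_mono) auto
      also have "\<dots> = e / 2 + th ^ (Suc n - N) * \<bar>E N\<bar>"
        using step.hyps by (simp add: Suc_diff_le field_simps)
      finally show ?case .
    qed
    have "(\<lambda>m. th ^ m * \<bar>E N\<bar>) \<longlonglongrightarrow> 0 * \<bar>E N\<bar>"
      using th by (intro tendsto_intros) auto
    then have hh: "\<forall>r>0. \<exists>no. \<forall>n\<ge>no. norm (th ^ n * \<bar>E N\<bar> - 0 * \<bar>E N\<bar>) < r"
      unfolding LIMSEQ_iff .
    have "e / 2 > 0" using e by simp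
    then have "\<exists>no. \<forall>n\<ge>no. norm (th ^ n * \<bar>E N\<bar> - 0 * \<bar>E N\<bar>) < e / 2"
      using hh by blast
    then obtain M where M: "\<And>m. m \<ge> M \<Longrightarrow> \<bar>th ^ m * \<bar>E N\<bar>\<bar> < e / 2"
      by auto
    show "\<exists>no. \<forall>n\<ge>no. norm (S n - L) < e"
    proof (intro exI allI impI)
      fix n assume "n \<ge> N + M"
      then have "\<bar>E n\<bar> \<le> e / 2 + th ^ (n - N) * \<bar>E N\<bar>" "\<bar>th ^ (n - N) * \<bar>E N\<bar>\<bar> < e / 2"
        using bound M by auto
      then show "norm (S n - L) < e" unfolding E_def by simp
    qed
  qed
qed

lemma wsum_lim:
  fixes u w :: "nat \<Rightarrow> nat \<Rightarrow> real"
  assumes I: "finite I" "I \<noteq> {}" and wpos: "\<And>n l. l \<in> I \<Longrightarrow> w n l > 0"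
    and lim: "\<And>l. l \<in> I \<Longrightarrow> (\<lambda>n. u n l / w n l) \<longlonglongrightarrow> c"
  shows "(\<lambda>n. (\<Sum>l\<in>I. u n l) / (\<Sum>l\<in>I. w n l)) \<longlonglongrightarrow> c"
proof -
  have Sw: "(\<Sum>l\<in>I. w n l) > 0" for n using I wpos by (intro sum_pos) auto
  have g: "(\<lambda>n. \<Sum>l\<in>I. \<bar>u n l / w n l - c\<bar>) \<longlonglongrightarrow> (\<Sum>l\<in>I. \<bar>c - c\<bar>)"
    by (intro tendsto_intros lim)
  have bnd: "\<bar>(\<Sum>l\<in>I. u n l) / (\<Sum>l\<in>I. w n l) - c\<bar> \<le> (\<Sum>l\<in>I. \<bar>u n l / w n l - c\<bar>)" for n
  proof -
    have "(\<Sum>l\<in>I. u n l) / (\<Sum>l\<in>I. w n l) - c = (\<Sum>l\<in>I. (u n l / w n l - c) * (w n l / (\<Sum>l\<in>I. w n l)))"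
    proof -
      have "(\<Sum>l\<in>I. (u n l / w n l - c) * (w n l / (\<Sum>l\<in>I. w n l)))
          = (\<Sum>l\<in>I. (u n l - c * w n l)) / (\<Sum>l\<in>I. w n l)"
        unfolding sum_divide_distrib
      proof (rule sum.cong)
        fix l assume "l \<in> I"
        then have "w n l > 0" by (rule wpos)
        then show "(u n l / w n l - c) * (w n l / (\<Sum>l\<in>I. w n l)) = (u n l - c * w n l) / (\<Sum>l\<in>I. w n l)"
          using Sw[of n] by (simp add: field_simps)
      qed simp
      also have "\<dots> = (\<Sum>l\<in>I. u n l) / (\<Sum>l\<in>I. w n l) - c"
        using Sw[of n] by (simp add: sum_subtractf sum_distrib_left[symmetric] field_simps)
      finally show ?thesis by simp
    qed
    also have "\<bar>\<dots>\<bar> \<le> (\<Sum>l\<in>I. \<bar>(u n l / w n l - c) * (w n l / (\<Sum>l\<in>I. w n l))\<bar>)"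
      by (rule sum_abs)
    also have "\<dots> \<le> (\<Sum>l\<in>I. \<bar>u n l / w n l - c\<bar>)"
    proof (rule sum_mono)
      fix l assume l: "l \<in> I"
      have "w n l \<le> (\<Sum>l\<in>I. w n l)" using l I wpos by (intro member_le_sum) (auto intro: less_imp_le)
      then have "\<bar>w n l / (\<Sum>l\<in>I. w n l)\<bar> \<le> 1" using Sw[of n] wpos[OF l, of n] by auto
      then show "\<bar>(u n l / w n l - c) * (w n l / (\<Sum>l\<in>I. w n l))\<bar> \<le> \<bar>u n l / w n l - c\<bar>"
        unfolding abs_mult by (rule mult_left_le) simp
    qed
    finally show ?thesis .
  qed
  have "(\<lambda>n. (\<Sum>l\<in>I. u n l) / (\<Sum>l\<in>I. w n l) - c) \<longlonglongrightarrow> 0"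
    by (rule abs_tendsto_zero_comp[OF _ allI[OF bnd]]) (use g in simp)
  then show ?thesis by (rule LIM_zero_cancel)
qed

lemma subseq_lim:
  fixes f :: "nat \<Rightarrow> real"
  assumes "f \<longlonglongrightarrow> L" "h > 0"
  shows "(\<lambda>q. f (q * h + c)) \<longlonglongrightarrow> L"
proof -
  have "strict_mono (\<lambda>q. q * h + c)" unfolding strict_mono_Suc_iff using assms(2) by simp
  from LIMSEQ_subseq_LIMSEQ[OF assms(1) this] show ?thesis by (simp add: o_def)
qed



lemma Pw_vec_add:
  "(\<Sum>j<k. Pw A k (s + n) i j * v j) = (\<Sum>l<k. Pw A k s i l * (\<Sum>j<k. Pw A k n l j * v j))"
proof -
  have "(\<Sum>j<k. Pw A k (s + n) i j * v j) = (\<Sum>j<k. (\<Sum>l<k. Pw A k s i l * Pw A k n l j) * v j)"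
    by (rule sum.cong) (simp_all add: Pw_add)
  also have "\<dots> = (\<Sum>j<k. \<Sum>l<k. Pw A k s i l * (Pw A k n l j * v j))"
    by (simp add: sum_distrib_right mult.assoc)
  also have "\<dots> = (\<Sum>l<k. \<Sum>j<k. Pw A k s i l * (Pw A k n l j * v j))"
    by (rule sum.swap)
  also have "\<dots> = (\<Sum>l<k. Pw A k s i l * (\<Sum>j<k. Pw A k n l j * v j))"
    by (simp add: sum_distrib_left)
  finally show ?thesis .
qed

lemma Pw_vec_0: "i < k \<Longrightarrow> (\<Sum>j<k. Pw A k 0 i j * v j) = v i"
proof -
  assume i: "i < k"
  have "(\<Sum>j<k. Pw A k 0 i j * v j) = (\<Sum>j<k. if i = j then v j else 0)"
    by (rule sum.cong) auto
  then show ?thesis using i by simp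
qed

lemma pos_lower_bound:
  fixes f :: "nat \<Rightarrow> nat \<Rightarrow> real"
  assumes "\<forall>a<k. \<forall>b<k. f a b > 0"
  shows "\<exists>d>0. \<forall>a<k. \<forall>b<k. d \<le> f a b"
proof (cases "k = 0")
  case True then show ?thesis by (intro exI[of _ 1]) auto
next
  case False
  define S where "S = (\<lambda>(a,b). f a b) ` ({..<k} \<times> {..<k})"
  have fin: "finite S" "S \<noteq> {}" using False by (auto simp: S_def)
  have "Min S > 0" using fin assms by (auto simp: S_def Min_gr_iff)
  moreover have "\<forall>a<k. \<forall>b<k. Min S \<le> f a b" using fin by (auto simp: S_def intro!: Min_le)
  ultimately show ?thesis by blast
qed

lemma ratio_lim:
  fixes A :: "nat \<Rightarrow> nat \<Rightarrow> real" and x y :: "nat \<Rightarrow> real"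
  assumes k: "0 < k" and nn: "\<forall>a<k. \<forall>b<k. A a b \<ge> 0"
    and rowpos: "\<forall>a<k. \<exists>b<k. A a b > 0"
    and prim0: "\<forall>a<k. \<forall>b<k. Pw A k p0 a b > 0"
    and ypos: "\<forall>j<k. y j > 0"
  shows "\<exists>c. \<forall>i<k. (\<lambda>n. (\<Sum>j<k. Pw A k n i j * x j) / (\<Sum>j<k. Pw A k n i j * y j)) \<longlonglongrightarrow> c"
proof -
  define p where "p = Suc p0"
  have Pnn: "\<And>n a b. a < k \<Longrightarrow> b < k \<Longrightarrow> Pw A k n a b \<ge> 0" using Pw_nonneg[OF nn] by blast
  have prim: "\<forall>a<k. \<forall>b<k. Pw A k p a b > 0"
  proof (intro allI impI)
    fix a b assume ab: "a < k" "b < k"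
    obtain c where c: "c < k" "A a c > 0" using rowpos ab by blast
    have "Pw A k p a b = (\<Sum>l<k. A a l * Pw A k p0 l b)" unfolding p_def by (rule Pw_Suc_left[OF ab])
    also have "\<dots> > 0"
      by (rule sum_pos2[of _ c]) (use c prim0 ab nn Pnn in \<open>auto intro!: mult_nonneg_nonneg\<close>)
    finally show "Pw A k p a b > 0" .
  qed
  have p: "p > 0" unfolding p_def by simp
  define X where "X n i = (\<Sum>j<k. Pw A k n i j * x j)" for n i
  define Y where "Y n i = (\<Sum>j<k. Pw A k n i j * y j)" for n i
  have Xs: "X (s + n) i = (\<Sum>l<k. Pw A k s i l * X n l)" for s n i
    unfolding X_def by (rule Pw_vec_add)
  have Ys: "Y (s + n) i = (\<Sum>l<k. Pw A k s i l * Y n l)" for s n i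
    unfolding Y_def by (rule Pw_vec_add)
  have Ypos: "Y n i > 0" if "i < k" for n i
    using that
  proof (induction n arbitrary: i)
    case 0 then show ?case using ypos Pw_vec_0[of i k A y] by (simp add: Y_def)
  next
    case (Suc n)
    obtain c where c: "c < k" "A i c > 0" using rowpos Suc.prems by blast
    have "Y (Suc n) i = (\<Sum>l<k. Pw A k (Suc 0) i l * Y n l)" using Ys[of "Suc 0" n i] by simp
    also have "\<dots> = (\<Sum>l<k. A i l * Y n l)" using Pw_one[OF Suc.prems] by simp
    also have "\<dots> > 0"
    proof (rule sum_pos2[of "{..<k}" c])
      show "0 < A i c * Y n c" using c Suc.IH by simp
      fix l assume "l \<in> {..<k}"
      then show "0 \<le> A i l * Y n l" using Suc.IH[of l] nn Suc.prems by (auto intro!: mult_nonneg_nonneg less_imp_le)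
    qed (use c in auto)
    finally show ?case .
  qed
  define B where "B n m M \<longleftrightarrow> (\<forall>i<k. m * Y n i \<le> X n i \<and> X n i \<le> M * Y n i)" for n m M
  have mono: "B (s + n) m M" if "B n m M" for s n m M
    unfolding B_def
  proof (intro allI impI conjI)
    fix i assume i: "i < k"
    have "X (s + n) i - m * Y (s + n) i = (\<Sum>l<k. Pw A k s i l * (X n l - m * Y n l))"
      unfolding Xs Ys by (simp add: sum_distrib_left algebra_simps sum_subtractf)
    also have "\<dots> \<ge> 0" using that Pnn i unfolding B_def by (auto intro!: sum_nonneg mult_nonneg_nonneg)
    finally show "m * Y (s + n) i \<le> X (s + n) i" by simp
    have "M * Y (s + n) i - X (s + n) i = (\<Sum>l<k. Pw A k s i l * (M * Y n l - X n l))"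
      unfolding Xs Ys by (simp add: sum_distrib_left algebra_simps sum_subtractf)
    also have "\<dots> \<ge> 0" using that Pnn i unfolding B_def by (auto intro!: sum_nonneg mult_nonneg_nonneg)
    finally show "X (s + n) i \<le> M * Y (s + n) i" by simp
  qed
  obtain d where d: "d > 0" "\<forall>a<k. \<forall>b<k. d \<le> Pw A k p a b" using pos_lower_bound[OF prim] by blast
  define Dl where "Dl = (\<Sum>a<k. \<Sum>b<k. Pw A k p a b)"
  have DlB: "Pw A k p a b \<le> Dl" if "a < k" "b < k" for a b
  proof -
    have "Pw A k p a b \<le> (\<Sum>b<k. Pw A k p a b)"
      by (rule member_le_sum) (use that Pnn in auto)
    also have "\<dots> \<le> Dl" unfolding Dl_def
      by (rule member_le_sum[of a "{..<k}" "\<lambda>a. \<Sum>b<k. Pw A k p a b"]) (use that Pnn in \<open>auto intro!: sum_nonneg\<close>)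
    finally show ?thesis .
  qed
  have dDl: "d \<le> Dl" using d(2) DlB k by (meson order_trans)
  define kap where "kap = d / Dl"
  have kap: "0 < kap" "kap \<le> 1" using d dDl by (auto simp: kap_def)
  have contr: "\<exists>m' M'. B (p + n) m' M' \<and> M' - m' \<le> (1 - kap) * (M - m)" if Bn: "B n m M" for n m M
  proof -
    define z where "z l = X n l - m * Y n l" for l
    define w where "w l = M * Y n l - X n l" for l
    define Sy where "Sy = (\<Sum>l<k. Y n l)"
    define Sz where "Sz = (\<Sum>l<k. z l)"
    define Sw where "Sw = (\<Sum>l<k. w l)"
    have z0: "\<And>l. l < k \<Longrightarrow> z l \<ge> 0" and w0: "\<And>l. l < k \<Longrightarrow> w l \<ge> 0"
      using Bn unfolding B_def z_def w_def by auto
    have Sy: "Sy > 0" unfolding Sy_def using k Ypos by (intro sum_pos) auto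
    have Sz0: "Sz \<ge> 0" "Sw \<ge> 0" unfolding Sz_def Sw_def using z0 w0 by (auto intro!: sum_nonneg)
    have Szw: "Sz + Sw = (M - m) * Sy"
      unfolding Sz_def Sw_def Sy_def z_def w_def sum.distrib[symmetric] sum_distrib_left
      by (rule sum.cong) (auto simp: algebra_simps)
    define m' where "m' = m + kap * Sz / Sy"
    define M' where "M' = M - kap * Sw / Sy"
    have Yup: "Y (p + n) i \<le> Dl * Sy" if i: "i < k" for i
      unfolding Ys Sy_def sum_distrib_left
      by (rule sum_mono) (use i DlB Ypos in \<open>auto intro!: mult_right_mono less_imp_le\<close>)
    have lowz: "(\<Sum>l<k. Pw A k p i l * v l) \<ge> d * (\<Sum>l<k. v l)" if i: "i < k" and v: "\<And>l. l < k \<Longrightarrow> v l \<ge> 0" for i v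
      unfolding sum_distrib_left
      by (rule sum_mono) (use i d v in \<open>auto intro!: mult_right_mono\<close>)
    have "B (p + n) m' M'"
      unfolding B_def
    proof (intro allI impI conjI)
      fix i assume i: "i < k"
      have e1: "X (p + n) i - m * Y (p + n) i = (\<Sum>l<k. Pw A k p i l * z l)"
        unfolding Xs Ys z_def by (simp add: sum_distrib_left algebra_simps sum_subtractf)
      have e2: "M * Y (p + n) i - X (p + n) i = (\<Sum>l<k. Pw A k p i l * w l)"
        unfolding Xs Ys w_def by (simp add: sum_distrib_left algebra_simps sum_subtractf)
      have "kap * Sz / Sy * Y (p + n) i \<le> kap * Sz / Sy * (Dl * Sy)"
        by (rule mult_left_mono[OF Yup[OF i]]) (use kap Sz0 Sy in auto)
      also have "\<dots> = d * Sz" unfolding kap_def using Sy dDl d by (auto simp: field_simps)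
      also have "\<dots> \<le> (\<Sum>l<k. Pw A k p i l * z l)" using lowz[OF i z0] unfolding Sz_def by simp
      finally show "m' * Y (p + n) i \<le> X (p + n) i" using e1 unfolding m'_def by (simp add: algebra_simps)
      have "kap * Sw / Sy * Y (p + n) i \<le> kap * Sw / Sy * (Dl * Sy)"
        by (rule mult_left_mono[OF Yup[OF i]]) (use kap Sz0 Sy in auto)
      also have "\<dots> = d * Sw" unfolding kap_def using Sy dDl d by (auto simp: field_simps)
      also have "\<dots> \<le> (\<Sum>l<k. Pw A k p i l * w l)" using lowz[OF i w0] unfolding Sw_def by simp
      finally show "X (p + n) i \<le> M' * Y (p + n) i" using e2 unfolding M'_def by (simp add: algebra_simps)
    qed
    moreover have "M' - m' = (1 - kap) * (M - m)"
    proof -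
      have "M' - m' = (M - m) - kap * (Sz + Sw) / Sy" unfolding M'_def m'_def by (simp add: algebra_simps add_divide_distrib)
      also have "\<dots> = (1 - kap) * (M - m)" unfolding Szw using Sy by (simp add: field_simps)
      finally show ?thesis .
    qed
    ultimately show ?thesis by (intro exI[of _ m'] exI[of _ M']) simp
  qed
  define r where "r n i = X n i / Y n i" for n i
  define lo where "lo n = Min (r n ` {..<k})" for n
  define hi where "hi n = Max (r n ` {..<k})" for n
  have fin: "finite (r n ` {..<k})" "r n ` {..<k} \<noteq> {}" for n using k by auto
  have lohi: "lo n \<le> r n i" "r n i \<le> hi n" if "i < k" for n i
    using fin that unfolding lo_def hi_def by auto
  have Blohi: "B n (lo n) (hi n)" for n
    unfolding B_def
  proof (intro allI impI conjI)
    fix i assume i: "i < k"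
    show "lo n * Y n i \<le> X n i" using lohi(1)[OF i] Ypos[OF i] unfolding r_def by (simp add: pos_le_divide_eq)
    show "X n i \<le> hi n * Y n i" using lohi(2)[OF i] Ypos[OF i] unfolding r_def by (simp add: pos_divide_le_eq)
  qed
  have Bbd: "m \<le> lo n \<and> hi n \<le> M" if "B n m M" for n m M
  proof -
    have "\<forall>i<k. m \<le> r n i \<and> r n i \<le> M"
      using that Ypos unfolding B_def r_def by (auto simp: pos_le_divide_eq pos_divide_le_eq)
    then show ?thesis using fin unfolding lo_def hi_def by auto
  qed
  have lo_inc: "incseq lo" and hi_dec: "decseq hi"
  proof -
    have "lo n \<le> lo (Suc n) \<and> hi (Suc n) \<le> hi n" for n
      using Bbd[OF mono[OF Blohi, of "Suc 0" n]] by simp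
    then show "incseq lo" "decseq hi" by (auto intro: incseq_SucI decseq_SucI)
  qed
  define wd where "wd n = hi n - lo n" for n
  have wd0: "wd n \<ge> 0" for n using lohi[OF k] unfolding wd_def by (meson order_trans diff_ge_0_iff_ge)
  have wdp: "wd (p + n) \<le> (1 - kap) * wd n" for n
  proof -
    obtain m' M' where "B (p + n) m' M'" "M' - m' \<le> (1 - kap) * (hi n - lo n)"
      using contr[OF Blohi] by blast
    then show ?thesis using Bbd[of "p + n" m' M'] unfolding wd_def by linarith
  qed
  have wdq: "wd (q * p) \<le> (1 - kap) ^ q * wd 0" for q
  proof (induction q)
    case 0 then show ?case by simp
  next
    case (Suc q)
    have "wd (Suc q * p) = wd (p + q * p)" by simp
    also have "\<dots> \<le> (1 - kap) * wd (q * p)" by (rule wdp)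
    also have "\<dots> \<le> (1 - kap) * ((1 - kap) ^ q * wd 0)"
      by (rule mult_left_mono[OF Suc.IH]) (use kap in auto)
    finally show ?case by simp
  qed
  have wd_anti: "wd n \<le> wd m" if "m \<le> n" for m n
    using lo_inc hi_dec that unfolding wd_def incseq_def decseq_def
    by (meson diff_mono)
  have wdb: "wd n \<le> (1 - kap) ^ (n div p) * wd 0" for n
  proof -
    have "(n div p) * p \<le> n" by simp
    then have "wd n \<le> wd ((n div p) * p)" by (rule wd_anti)
    also have "\<dots> \<le> (1 - kap) ^ (n div p) * wd 0" by (rule wdq)
    finally show ?thesis .
  qed
  have divlim: "filterlim (\<lambda>n. n div p) at_top sequentially"
    unfolding filterlim_at_top eventually_sequentially
  proof
    fix Z show "\<exists>N. \<forall>n\<ge>N. Z \<le> n div p"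
    proof (intro exI[of _ "Z * p"] allI impI)
      fix n assume "Z * p \<le> n"
      then show "Z \<le> n div p" using div_le_mono[of "Z * p" n p] p by simp
    qed
  qed
  have "(\<lambda>q. (1 - kap) ^ q * wd 0) \<longlonglongrightarrow> 0 * wd 0"
    using kap by (intro tendsto_intros) auto
  then have "(\<lambda>n. (1 - kap) ^ (n div p) * wd 0) \<longlonglongrightarrow> 0"
    using filterlim_compose[OF _ divlim] by fastforce
  then have wdlim: "wd \<longlonglongrightarrow> 0"
    using wd0 wdb by (intro tendsto_sandwich[of "\<lambda>n. 0" wd _ "\<lambda>n. (1 - kap) ^ (n div p) * wd 0"]) auto
  have "\<forall>n. lo n \<le> hi 0" using lohi[OF k] hi_dec unfolding decseq_def by (meson order_trans le0)
  then obtain L where Llim: "lo \<longlonglongrightarrow> L" using incseq_convergent[OF lo_inc] by blast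
  have hilim: "hi \<longlonglongrightarrow> L"
  proof -
    have "(\<lambda>n. lo n + wd n) \<longlonglongrightarrow> L + 0" by (intro tendsto_intros Llim wdlim)
    then show ?thesis unfolding wd_def by simp
  qed
  show ?thesis
  proof (intro exI allI impI)
    fix i assume i: "i < k"
    have "(\<lambda>n. r n i) \<longlonglongrightarrow> L"
    proof (rule tendsto_sandwich[of lo _ _ hi])
      show "\<forall>\<^sub>F n in sequentially. lo n \<le> r n i" using lohi(1)[OF i] by (intro always_eventually) blast
      show "\<forall>\<^sub>F n in sequentially. r n i \<le> hi n" using lohi(2)[OF i] by (intro always_eventually) blast
    qed (rule Llim, rule hilim)
    then show "(\<lambda>n. (\<Sum>j<k. Pw A k n i j * x j) / (\<Sum>j<k. Pw A k n i j * y j)) \<longlonglongrightarrow> L"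
      unfolding r_def X_def Y_def .
  qed
qed



lemma Pw_pos_vec:
  assumes nn: "\<forall>a<k. \<forall>b<k. A a b \<ge> 0" and rowpos: "\<forall>a<k. \<exists>b<k. A a b > 0"
    and ypos: "\<forall>j<k. y j > 0" and i: "i < k"
  shows "(\<Sum>j<k. Pw A k n i j * y j) > 0"
  using i
proof (induction n arbitrary: i)
  case 0 then show ?case using ypos Pw_vec_0[of i k A y] by simp
next
  case (Suc n)
  obtain c where c: "c < k" "A i c > 0" using rowpos Suc.prems by blast
  have "(\<Sum>j<k. Pw A k (Suc 0 + n) i j * y j) = (\<Sum>l<k. Pw A k (Suc 0) i l * (\<Sum>j<k. Pw A k n l j * y j))"
    by (rule Pw_vec_add)
  also have "\<dots> = (\<Sum>l<k. A i l * (\<Sum>j<k. Pw A k n l j * y j))" using Pw_one[OF Suc.prems] by simp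
  also have "\<dots> > 0"
  proof (rule sum_pos2[of "{..<k}" c])
    show "0 < A i c * (\<Sum>j<k. Pw A k n c j * y j)" using c Suc.IH by simp
    fix l assume "l \<in> {..<k}"
    then show "0 \<le> A i l * (\<Sum>j<k. Pw A k n l j * y j)" using Suc.IH[of l] nn Suc.prems
      by (auto intro!: mult_nonneg_nonneg less_imp_le)
  qed (use c in auto)
  finally show ?case by simp
qed

theorem lemma3p5:
  fixes K :: "real mat" and k m i j :: nat
  defines "lam \<equiv> perron_eigenvalue K"
    and "D \<equiv> (\<lambda>a n. real (card (semiball K [a] n)))"
  assumes "K \<in> carrier_mat k k"
    and "k \<ge> 2"
    and "\<forall>a<k. \<forall>b<k. K $$ (a,b) \<in> {0,1}"
    and "primitive_mat K"
    and "i < k" and "j < k"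
  shows
   "((\<exists>L>0. (\<lambda>n. D j n / D i (n + m + 1)) \<longlonglongrightarrow> L) \<and>
    (\<Sum>l<k. lim (\<lambda>n. (K ^\<^sub>m (m+1)) $$ (i,l) * D l n / D i (n + m + 1))) = 1) \<and>
   (\<exists>\<gamma>>0. \<forall>r. (\<lambda>q. (\<Sum>l<q. (K ^\<^sub>m (r + l*(m+1) + 1)) $$ (i,j)) / D i (q*(m+1) + r))
              \<longlonglongrightarrow> \<gamma> / (lam ^ (m+1) - 1)) \<and>
   (\<forall>r. (\<Sum>j'<k. lim (\<lambda>q. (\<Sum>l<q. (K ^\<^sub>m (r + l*(m+1) + 1)) $$ (i,j')) * D j' m
                              / D i (q*(m+1) + r))) = 1)"
proof -
  note Kc = assms(3) and k2 = assms(4) and K01 = assms(5) and prim = assms(6) and i = assms(7) and j = assms(8)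
  have k0: "0 < k" using k2 by simp
  define Kf where "Kf = (\<lambda>a b. K $$ (a,b))"
  define P where "P = Pw Kf k"
  define R where "R n a = (\<Sum>b<k. P n a b)" for n a
  have Kmat: "(K ^\<^sub>m n) $$ (a,b) = P n a b" if "a < k" "b < k" for n a b
    unfolding P_def Kf_def by (rule Pw_mat[OF Kc that])
  have Dfact: "D a n = (\<Sum>t\<le>n. R t a)" if "a < k" for a n
    unfolding D_def R_def P_def Kf_def by (rule semiball_count[OF Kc K01 that])
  have nn: "\<forall>a<k. \<forall>b<k. Kf a b \<ge> 0" using K01 unfolding Kf_def by fastforce
  have Pnn: "P n a b \<ge> 0" if "a < k" "b < k" for n a b unfolding P_def using Pw_nonneg[OF nn that] .
  have Pint: "P n a b = real (card (W K n a b))" if "a < k" "b < k" for n a b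
    using W_count[OF Kc K01 that(1) that(2)] unfolding P_def Kf_def by simp
  obtain p0 where p0: "\<forall>a<k. \<forall>b<k. P p0 a b > 0"
  proof -
    from prim obtain p where "\<forall>a<dim_row K. \<forall>b<dim_col K. (K ^\<^sub>m p) $$ (a,b) > 0"
      unfolding primitive_mat_def by blast
    then have "\<forall>a<k. \<forall>b<k. P p a b > 0" using Kc Kmat by auto
    then show ?thesis using that by blast
  qed
  have "p0 \<noteq> 0"
  proof
    assume "p0 = 0"
    then have "P p0 0 1 = 0" unfolding P_def by simp
    moreover have "P p0 0 1 > 0" using p0 k2 by simp
    ultimately show False by simp
  qed
  then obtain p' where p': "p0 = Suc p'" by (cases p0) auto
  have rowpos: "\<forall>a<k. \<exists>b<k. Kf a b > 0"
  proof (intro allI impI, rule ccontr)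
    fix a assume a: "a < k" and "\<not> (\<exists>b<k. Kf a b > 0)"
    then have z: "\<forall>b<k. Kf a b = 0" using nn by force
    have "P p0 a 0 = (\<Sum>l<k. Kf a l * P p' l 0)" unfolding p' P_def by (rule Pw_Suc_left[OF a k0])
    also have "\<dots> = 0" using z by simp
    finally show False using p0 a k0 by force
  qed
  have colpos: "\<forall>b<k. \<exists>a<k. Kf a b > 0"
  proof (intro allI impI, rule ccontr)
    fix b assume b: "b < k" and "\<not> (\<exists>a<k. Kf a b > 0)"
    then have z: "\<forall>a<k. Kf a b = 0" using nn by force
    have "P p0 0 b = (\<Sum>l<k. P p' 0 l * Kf l b)" unfolding p' P_def by simp
    also have "\<dots> = 0" using z by simp
    finally show False using p0 b k0 by force
  qed
  define KT where "KT = (\<lambda>a b. Kf b a)"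
  have PT: "Pw KT k n a b = P n b a" if "a < k" "b < k" for n a b
    unfolding KT_def P_def by (rule Pw_transpose[OF that])
  have nnT: "\<forall>a<k. \<forall>b<k. KT a b \<ge> 0" using nn unfolding KT_def by auto
  have rowposT: "\<forall>a<k. \<exists>b<k. KT a b > 0" using colpos unfolding KT_def by auto
  have p0T: "\<forall>a<k. \<forall>b<k. Pw KT k p0 a b > 0" using p0 PT by auto
  have Rpos: "R n a > 0" if "a < k" for n a
    using Pw_pos_vec[OF nn rowpos _ that, of "\<lambda>_. 1" n] unfolding R_def P_def by simp
  define CS where "CS n l = (\<Sum>a<k. P n a l)" for n l
  have CSpos: "CS n l > 0" if "l < k" for n l
  proof -
    have "(\<Sum>a<k. Pw KT k n l a * 1) > 0" using Pw_pos_vec[OF nnT rowposT _ that, of "\<lambda>_. 1" n] by simp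
    also have "(\<Sum>a<k. Pw KT k n l a * 1) = CS n l" unfolding CS_def using PT that by simp
    finally show ?thesis .
  qed
  have "\<forall>jj. \<exists>c. jj < k \<longrightarrow> (\<forall>ii<k. (\<lambda>n. P n ii jj / R n ii) \<longlonglongrightarrow> c)"
  proof (intro allI)
    fix jj show "\<exists>c. jj < k \<longrightarrow> (\<forall>ii<k. (\<lambda>n. P n ii jj / R n ii) \<longlonglongrightarrow> c)"
    proof (cases "jj < k")
      case True
      obtain c where c: "\<forall>ii<k. (\<lambda>n. (\<Sum>l<k. Pw Kf k n ii l * (if l = jj then 1 else 0)) / (\<Sum>l<k. Pw Kf k n ii l * 1)) \<longlonglongrightarrow> c"
        using ratio_lim[OF k0 nn rowpos p0[unfolded P_def], of "\<lambda>_. 1" "\<lambda>l. if l = jj then 1 else 0"] by auto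
      have "(\<Sum>l<k. Pw Kf k n ii l * (if l = jj then 1 else 0)) = P n ii jj" for n ii
        using True unfolding P_def by (simp add: if_distrib[where f="\<lambda>x. _ * x"] cong: if_cong)
      then show ?thesis using c unfolding R_def P_def by auto
    qed simp
  qed
  then obtain a where alim: "\<And>jj ii. jj < k \<Longrightarrow> ii < k \<Longrightarrow> (\<lambda>n. P n ii jj / R n ii) \<longlonglongrightarrow> a jj"
    by metis
  have "\<forall>ii. \<exists>c. ii < k \<longrightarrow> (\<forall>l<k. (\<lambda>n. P n ii l / CS n l) \<longlonglongrightarrow> c)"
  proof (intro allI)
    fix ii show "\<exists>c. ii < k \<longrightarrow> (\<forall>l<k. (\<lambda>n. P n ii l / CS n l) \<longlonglongrightarrow> c)"
    proof (cases "ii < k")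
      case True
      obtain c where c: "\<forall>l<k. (\<lambda>n. (\<Sum>a<k. Pw KT k n l a * (if a = ii then 1 else 0)) / (\<Sum>a<k. Pw KT k n l a * 1)) \<longlonglongrightarrow> c"
        using ratio_lim[OF k0 nnT rowposT p0T, of "\<lambda>_. 1" "\<lambda>a. if a = ii then 1 else 0"] by auto
      have "(\<Sum>a<k. Pw KT k n l a * (if a = ii then 1 else 0)) = P n ii l" if "l < k" for n l
        using True that PT by (simp add: if_distrib[where f="\<lambda>x. _ * x"] cong: if_cong)
      moreover have "(\<Sum>a<k. Pw KT k n l a * 1) = CS n l" if "l < k" for n l
        using that PT unfolding CS_def by simp
      ultimately show ?thesis using c by auto
    qed simp
  qed
  then obtain bb where bcs: "\<And>ii l. ii < k \<Longrightarrow> l < k \<Longrightarrow> (\<lambda>n. P n ii l / CS n l) \<longlonglongrightarrow> bb ii"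
    by metis
  define T where "T n = (\<Sum>a<k. R n a)" for n
  have T_CS: "T n = (\<Sum>l<k. CS n l)" for n
    unfolding T_def R_def CS_def by (rule sum.swap)
  have Tpos: "T n > 0" for n unfolding T_def using Rpos k0 by (intro sum_pos) auto
  have blim: "(\<lambda>n. R n ii / T n) \<longlonglongrightarrow> bb ii" if ii: "ii < k" for ii
  proof -
    have "(\<lambda>n. (\<Sum>l\<in>{..<k}. P n ii l) / (\<Sum>l\<in>{..<k}. CS n l)) \<longlonglongrightarrow> bb ii"
      by (rule wsum_lim) (use k0 CSpos bcs ii in auto)
    then show ?thesis unfolding R_def T_CS .
  qed
  define r1 where "r1 l = (\<Sum>b<k. Kf l b)" for l
  define \<rho> where "\<rho> = (\<Sum>l<k. a l * r1 l)"
  have R_Suc: "R (Suc n) ii = (\<Sum>l<k. P n ii l * r1 l)" for n ii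
  proof -
    have "R (Suc n) ii = (\<Sum>b<k. \<Sum>l<k. P n ii l * Kf l b)" unfolding R_def P_def by simp
    also have "\<dots> = (\<Sum>l<k. \<Sum>b<k. P n ii l * Kf l b)" by (rule sum.swap)
    also have "\<dots> = (\<Sum>l<k. P n ii l * r1 l)" unfolding r1_def by (simp add: sum_distrib_left)
    finally show ?thesis .
  qed
  have R_Suc_left: "R (Suc n) ii = (\<Sum>l<k. Kf ii l * R n l)" if ii: "ii < k" for n ii
  proof -
    have "R (Suc n) ii = (\<Sum>b<k. \<Sum>l<k. Kf ii l * P n l b)"
      unfolding R_def P_def by (rule sum.cong) (use ii Pw_Suc_left in auto)
    also have "\<dots> = (\<Sum>l<k. \<Sum>b<k. Kf ii l * P n l b)" by (rule sum.swap)
    also have "\<dots> = (\<Sum>l<k. Kf ii l * R n l)" unfolding R_def by (simp add: sum_distrib_left)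
    finally show ?thesis .
  qed
  have Rratio: "(\<lambda>n. R (Suc n) ii / R n ii) \<longlonglongrightarrow> \<rho>" if ii: "ii < k" for ii
  proof -
    have "(\<lambda>n. \<Sum>l<k. (P n ii l / R n ii) * r1 l) \<longlonglongrightarrow> (\<Sum>l<k. a l * r1 l)"
      by (intro tendsto_intros) (use alim ii in auto)
    moreover have "(\<Sum>l<k. (P n ii l / R n ii) * r1 l) = R (Suc n) ii / R n ii" for n
      unfolding R_Suc by (simp add: sum_divide_distrib)
    ultimately show ?thesis unfolding \<rho>_def by simp
  qed
  have Tratio: "(\<lambda>n. T (Suc n) / T n) \<longlonglongrightarrow> \<rho>"
  proof -
    have "(\<lambda>n. (\<Sum>l\<in>{..<k}. R (Suc n) l) / (\<Sum>l\<in>{..<k}. R n l)) \<longlonglongrightarrow> \<rho>"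
      by (rule wsum_lim) (use k0 Rpos Rratio in auto)
    then show ?thesis unfolding T_def .
  qed
  have a_nn: "a jj \<ge> 0" if "jj < k" for jj
    by (rule LIMSEQ_le_const[OF alim[OF that k0]]) (use Pnn Rpos that k0 in \<open>auto intro!: divide_nonneg_pos\<close>)
  have b_nn: "bb ii \<ge> 0" if "ii < k" for ii
    by (rule LIMSEQ_le_const[OF blim[OF that]]) (use Rpos Tpos that in \<open>auto intro!: divide_nonneg_pos less_imp_le\<close>)
  have a_sum: "(\<Sum>l<k. a l) = 1"
  proof -
    have "(\<lambda>n. \<Sum>l<k. P n 0 l / R n 0) \<longlonglongrightarrow> (\<Sum>l<k. a l)"
      by (intro tendsto_intros) (use alim k0 in auto)
    moreover have "(\<lambda>n. \<Sum>l<k. P n 0 l / R n 0) = (\<lambda>n. 1)"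
    proof
      fix n show "(\<Sum>l<k. P n 0 l / R n 0) = 1"
        using Rpos[OF k0, of n] unfolding sum_divide_distrib[symmetric] R_def by simp
    qed
    ultimately have "(\<lambda>n. 1::real) \<longlonglongrightarrow> (\<Sum>l<k. a l)" by simp
    then show ?thesis using LIMSEQ_unique[OF tendsto_const] by metis
  qed
  have b_sum: "(\<Sum>l<k. bb l) = 1"
  proof -
    have "(\<lambda>n. \<Sum>l<k. R n l / T n) \<longlonglongrightarrow> (\<Sum>l<k. bb l)"
      by (intro tendsto_intros) (use blim in auto)
    moreover have "(\<lambda>n. \<Sum>l<k. R n l / T n) = (\<lambda>n. 1)"
    proof
      fix n show "(\<Sum>l<k. R n l / T n) = 1"
        using Tpos[of n] unfolding sum_divide_distrib[symmetric] T_def by simp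
    qed
    ultimately have "(\<lambda>n. 1::real) \<longlonglongrightarrow> (\<Sum>l<k. bb l)" by simp
    then show ?thesis using LIMSEQ_unique[OF tendsto_const] by metis
  qed
  have left_eig: "(\<Sum>l<k. a l * Kf l jj) = \<rho> * a jj" if jj: "jj < k" for jj
  proof -
    have lim1: "(\<lambda>n. \<Sum>l<k. (P n 0 l / R n 0) * Kf l jj) \<longlonglongrightarrow> (\<Sum>l<k. a l * Kf l jj)"
      by (intro tendsto_intros) (use alim k0 in auto)
    have eq: "(\<lambda>n. \<Sum>l<k. (P n 0 l / R n 0) * Kf l jj) = (\<lambda>n. (P (Suc n) 0 jj / R (Suc n) 0) * (R (Suc n) 0 / R n 0))"
    proof
      fix n show "(\<Sum>l<k. (P n 0 l / R n 0) * Kf l jj) = (P (Suc n) 0 jj / R (Suc n) 0) * (R (Suc n) 0 / R n 0)"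
      proof -
        have "(\<Sum>l<k. (P n 0 l / R n 0) * Kf l jj) = P (Suc n) 0 jj / R n 0"
          unfolding P_def by (simp add: sum_divide_distrib)
        also have "\<dots> = (P (Suc n) 0 jj / R (Suc n) 0) * (R (Suc n) 0 / R n 0)"
          using Rpos[OF k0, of "Suc n"] by simp
        finally show ?thesis .
      qed
    qed
    have lim2: "(\<lambda>n. (P (Suc n) 0 jj / R (Suc n) 0) * (R (Suc n) 0 / R n 0)) \<longlonglongrightarrow> a jj * \<rho>"
      by (intro tendsto_intros LIMSEQ_Suc[OF alim[OF jj k0]] Rratio[OF k0])
    have "(\<Sum>l<k. a l * Kf l jj) = a jj * \<rho>" using LIMSEQ_unique[OF lim1[unfolded eq] lim2] .
    then show ?thesis by simp
  qed
  have right_eig: "(\<Sum>l<k. Kf ii l * bb l) = \<rho> * bb ii" if ii: "ii < k" for ii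
  proof -
    have lim1: "(\<lambda>n. \<Sum>l<k. Kf ii l * (R n l / T n)) \<longlonglongrightarrow> (\<Sum>l<k. Kf ii l * bb l)"
      by (intro tendsto_intros) (use blim in auto)
    have eq: "(\<lambda>n. \<Sum>l<k. Kf ii l * (R n l / T n)) = (\<lambda>n. (R (Suc n) ii / T (Suc n)) * (T (Suc n) / T n))"
    proof
      fix n show "(\<Sum>l<k. Kf ii l * (R n l / T n)) = (R (Suc n) ii / T (Suc n)) * (T (Suc n) / T n)"
      proof -
        have "(\<Sum>l<k. Kf ii l * (R n l / T n)) = R (Suc n) ii / T n"
          unfolding R_Suc_left[OF ii, of n] by (simp add: sum_divide_distrib)
        also have "\<dots> = (R (Suc n) ii / T (Suc n)) * (T (Suc n) / T n)"
          using Tpos[of "Suc n"] by simp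
        finally show ?thesis .
      qed
    qed
    have lim2: "(\<lambda>n. (R (Suc n) ii / T (Suc n)) * (T (Suc n) / T n)) \<longlonglongrightarrow> bb ii * \<rho>"
      by (intro tendsto_intros LIMSEQ_Suc[OF blim[OF ii]] Tratio)
    have "(\<Sum>l<k. Kf ii l * bb l) = bb ii * \<rho>" using LIMSEQ_unique[OF lim1[unfolded eq] lim2] .
    then show ?thesis by simp
  qed
  have left_pow: "(\<Sum>l<k. a l * P t l jj) = \<rho> ^ t * a jj" if jj: "jj < k" for t jj
    using jj
  proof (induction t arbitrary: jj)
    case 0
    have "(\<Sum>l<k. a l * P 0 l jj) = (\<Sum>l<k. if l = jj then a l else 0)"
      unfolding P_def by (rule sum.cong) auto
    then show ?case using 0 by simp
  next
    case (Suc t)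
    have "(\<Sum>l<k. a l * P (Suc t) l jj) = (\<Sum>l<k. \<Sum>l'<k. a l * (P t l l' * Kf l' jj))"
      unfolding P_def by (simp add: sum_distrib_left)
    also have "\<dots> = (\<Sum>l'<k. \<Sum>l<k. a l * (P t l l' * Kf l' jj))" by (rule sum.swap)
    also have "\<dots> = (\<Sum>l'<k. (\<Sum>l<k. a l * P t l l') * Kf l' jj)"
      by (simp add: sum_distrib_right mult.assoc)
    also have "\<dots> = (\<Sum>l'<k. \<rho> ^ t * (a l' * Kf l' jj))"
      by (rule sum.cong) (use Suc.IH in auto)
    also have "\<dots> = \<rho> ^ t * (\<rho> * a jj)" using left_eig[OF Suc.prems] by (simp add: sum_distrib_left[symmetric])
    finally show ?case by simp
  qed
  have right_pow: "(\<Sum>l<k. P t ii l * bb l) = \<rho> ^ t * bb ii" if ii: "ii < k" for t ii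
    using ii
  proof (induction t arbitrary: ii)
    case 0
    have "(\<Sum>l<k. P 0 ii l * bb l) = (\<Sum>l<k. if ii = l then bb l else 0)"
      unfolding P_def by (rule sum.cong) auto
    then show ?case using 0 by simp
  next
    case (Suc t)
    have "(\<Sum>l<k. P (Suc t) ii l * bb l) = (\<Sum>l<k. (\<Sum>l'<k. Kf ii l' * P t l' l) * bb l)"
      unfolding P_def by (rule sum.cong) (use Suc.prems Pw_Suc_left in auto)
    also have "\<dots> = (\<Sum>l<k. \<Sum>l'<k. Kf ii l' * (P t l' l * bb l))"
      by (simp add: sum_distrib_right mult.assoc)
    also have "\<dots> = (\<Sum>l'<k. \<Sum>l<k. Kf ii l' * (P t l' l * bb l))" by (rule sum.swap)
    also have "\<dots> = (\<Sum>l'<k. Kf ii l' * (\<Sum>l<k. P t l' l * bb l))"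
      by (simp add: sum_distrib_left)
    also have "\<dots> = (\<Sum>l'<k. \<rho> ^ t * (Kf ii l' * bb l'))"
      by (rule sum.cong) (use Suc.IH in auto)
    also have "\<dots> = \<rho> ^ t * (\<rho> * bb ii)" using right_eig[OF Suc.prems] by (simp add: sum_distrib_left[symmetric])
    finally show ?case by simp
  qed
  have rho_nn: "\<rho> \<ge> 0" unfolding \<rho>_def r1_def using a_nn nn
    by (auto intro!: sum_nonneg mult_nonneg_nonneg)
  have P1: "P p0 a' b' \<ge> 1" if "a' < k" "b' < k" for a' b'
  proof -
    have "real (card (W K p0 a' b')) > 0" using p0 that Pint by auto
    then have "card (W K p0 a' b') \<ge> 1" by linarith
    then show ?thesis using Pint[OF that] by simp
  qed
  have aP: "a l \<le> a l * P p0 l jj" if "l < k" "jj < k" for l jj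
    using mult_left_mono[OF P1[OF that] a_nn[OF that(1)]] by simp
  have bP: "bb l \<le> P p0 ii l * bb l" if "ii < k" "l < k" for l ii
    using mult_right_mono[OF P1[OF that] b_nn[OF that(2)]] by simp
  have rho_pow_k: "\<rho> ^ p0 \<ge> real k"
  proof -
    have "real k = (\<Sum>jj<k. \<Sum>l<k. a l)" using a_sum by simp
    also have "\<dots> \<le> (\<Sum>jj<k. \<Sum>l<k. a l * P p0 l jj)"
      by (intro sum_mono) (use aP in auto)
    also have "\<dots> = (\<Sum>jj<k. \<rho> ^ p0 * a jj)" using left_pow by simp
    also have "\<dots> = \<rho> ^ p0" using a_sum by (simp add: sum_distrib_left[symmetric])
    finally show ?thesis .
  qed
  have rho1: "\<rho> > 1"
  proof (rule ccontr)
    assume "\<not> \<rho> > 1"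
    then have "\<rho> ^ p0 \<le> 1" using rho_nn by (intro power_le_one) auto
    then show False using rho_pow_k k2 by linarith
  qed
  have a_pos: "a jj > 0" if jj: "jj < k" for jj
  proof -
    have "1 = (\<Sum>l<k. a l)" using a_sum by simp
    also have "\<dots> \<le> (\<Sum>l<k. a l * P p0 l jj)"
      by (intro sum_mono) (use aP jj in auto)
    also have "\<dots> = \<rho> ^ p0 * a jj" using left_pow[OF jj] .
    finally have "0 < \<rho> ^ p0 * a jj" by simp
    then show ?thesis using rho1 by (simp add: zero_less_mult_iff)
  qed
  have b_pos: "bb ii > 0" if ii: "ii < k" for ii
  proof -
    have "1 = (\<Sum>l<k. bb l)" using b_sum by simp
    also have "\<dots> \<le> (\<Sum>l<k. P p0 ii l * bb l)"
      by (intro sum_mono) (use bP ii in auto)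
    also have "\<dots> = \<rho> ^ p0 * bb ii" using right_pow[OF ii] .
    finally have "0 < \<rho> ^ p0 * bb ii" by simp
    then show ?thesis using rho1 by (simp add: zero_less_mult_iff)
  qed
  have Kv: "(K *\<^sub>v v) $ ii = (\<Sum>l<k. Kf ii l * v $ l)" if ii: "ii < k" and v: "dim_vec v = k" for v ii
  proof -
    have "(K *\<^sub>v v) $ ii = row K ii \<bullet> v" using Kc ii by simp
    also have "\<dots> = (\<Sum>l\<in>{0..<k}. K $$ (ii,l) * v $ l)" unfolding scalar_prod_def using Kc ii v
      by (auto intro!: sum.cong)
    also have "\<dots> = (\<Sum>l<k. Kf ii l * v $ l)" by (simp add: Kf_def lessThan_atLeast0)
    finally show ?thesis .
  qed
  have ev: "eigenvalue K \<rho>"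
    unfolding eigenvalue_def eigenvector_def
  proof (intro exI[of _ "vec k bb"] conjI)
    show "vec k bb \<in> carrier_vec (dim_row K)" using Kc by simp
    show "vec k bb \<noteq> 0\<^sub>v (dim_row K)"
    proof
      assume "vec k bb = 0\<^sub>v (dim_row K)"
      then have "vec k bb $ 0 = 0\<^sub>v (dim_row K) $ 0" by simp
      then show False using b_pos[OF k0] k0 Kc by simp
    qed
    show "K *\<^sub>v vec k bb = \<rho> \<cdot>\<^sub>v vec k bb"
    proof (rule eq_vecI)
      fix ii assume "ii < dim_vec (\<rho> \<cdot>\<^sub>v vec k bb)"
      then have ii: "ii < k" by simp
      have "(K *\<^sub>v vec k bb) $ ii = (\<Sum>l<k. Kf ii l * vec k bb $ l)" by (rule Kv[OF ii]) simp
      also have "\<dots> = (\<Sum>l<k. Kf ii l * bb l)" by simp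
      also have "\<dots> = \<rho> * bb ii" by (rule right_eig[OF ii])
      finally show "(K *\<^sub>v vec k bb) $ ii = (\<rho> \<cdot>\<^sub>v vec k bb) $ ii" using ii by simp
    qed (use Kc in simp)
  qed
  have ev_le: "x \<le> \<rho>" if ex: "eigenvalue K x" for x
  proof -
    obtain w where w: "w \<in> carrier_vec k" "w \<noteq> 0\<^sub>v k" "K *\<^sub>v w = x \<cdot>\<^sub>v w"
      using ex Kc unfolding eigenvalue_def eigenvector_def by auto
    have dw: "dim_vec w = k" using w by simp
    have comp: "x * w $ ii = (\<Sum>l<k. Kf ii l * w $ l)" if ii: "ii < k" for ii
    proof -
      have "x * w $ ii = (x \<cdot>\<^sub>v w) $ ii" using ii dw by simp
      also have "\<dots> = (K *\<^sub>v w) $ ii" using w by simp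
      also have "\<dots> = (\<Sum>l<k. Kf ii l * w $ l)" by (rule Kv[OF ii dw])
      finally show ?thesis .
    qed
    have absb: "\<bar>x\<bar> * \<bar>w $ ii\<bar> \<le> (\<Sum>l<k. Kf ii l * \<bar>w $ l\<bar>)" if ii: "ii < k" for ii
    proof -
      have "\<bar>x\<bar> * \<bar>w $ ii\<bar> = \<bar>\<Sum>l<k. Kf ii l * w $ l\<bar>" using comp[OF ii] by (simp add: abs_mult[symmetric])
      also have "\<dots> \<le> (\<Sum>l<k. \<bar>Kf ii l * w $ l\<bar>)" by (rule sum_abs)
      also have "\<dots> = (\<Sum>l<k. Kf ii l * \<bar>w $ l\<bar>)" using nn ii by (auto intro!: sum.cong simp: abs_mult)
      finally show ?thesis .
    qed
    obtain i0 where i0: "i0 < k" "w $ i0 \<noteq> 0"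
    proof (rule ccontr)
      assume "\<not> thesis"
      then have "\<forall>ii<k. w $ ii = 0" using that by blast
      then have "w = 0\<^sub>v k" using dw by (intro eq_vecI) auto
      then show False using w by simp
    qed
    define S where "S = (\<Sum>ii<k. a ii * \<bar>w $ ii\<bar>)"
    have Spos: "S > 0" unfolding S_def
    proof (rule sum_pos2[of "{..<k}" i0])
      show "0 < a i0 * \<bar>w $ i0\<bar>" using a_pos[OF i0(1)] i0 by simp
    qed (use i0 a_nn in auto)
    have "\<bar>x\<bar> * S = (\<Sum>ii<k. a ii * (\<bar>x\<bar> * \<bar>w $ ii\<bar>))" unfolding S_def
      by (simp add: sum_distrib_left algebra_simps)
    also have "\<dots> \<le> (\<Sum>ii<k. a ii * (\<Sum>l<k. Kf ii l * \<bar>w $ l\<bar>))"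
      by (rule sum_mono) (use absb a_nn in \<open>auto intro!: mult_left_mono\<close>)
    also have "\<dots> = (\<Sum>ii<k. \<Sum>l<k. a ii * Kf ii l * \<bar>w $ l\<bar>)" by (simp add: sum_distrib_left mult.assoc)
    also have "\<dots> = (\<Sum>l<k. \<Sum>ii<k. a ii * Kf ii l * \<bar>w $ l\<bar>)" by (rule sum.swap)
    also have "\<dots> = (\<Sum>l<k. (\<Sum>ii<k. a ii * Kf ii l) * \<bar>w $ l\<bar>)" by (simp add: sum_distrib_right)
    also have "\<dots> = (\<Sum>l<k. \<rho> * (a l * \<bar>w $ l\<bar>))" by (rule sum.cong) (use left_eig in auto)
    also have "\<dots> = \<rho> * S" unfolding S_def by (simp add: sum_distrib_left)
    finally have "\<bar>x\<bar> * S \<le> \<rho> * S" .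
    then have "\<bar>x\<bar> \<le> \<rho>" using Spos by simp
    then show ?thesis by simp
  qed
  have finev: "finite {x. eigenvalue K x}"
  proof -
    have "{x. eigenvalue K x} = {x. poly (char_poly K) x = 0}"
      using eigenvalue_root_char_poly[OF Kc] by auto
    moreover have "char_poly K \<noteq> 0" using degree_monic_char_poly[OF Kc] by auto
    ultimately show ?thesis using poly_roots_finite by simp
  qed
  have lam: "lam = \<rho>" unfolding lam_def perron_eigenvalue_def
    by (rule Max_eqI) (use finev ev ev_le in auto)
  have rho0: "\<rho> > 0" "\<rho> \<noteq> 0" using rho1 by auto
  have Dpos: "D aa n > 0" if aa: "aa < k" for aa n
    unfolding Dfact[OF aa] using Rpos[OF aa] by (intro sum_pos) auto
  have Tne: "T n \<noteq> 0" for n using Tpos[of n] by simp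
  define dd where "dd aa = bb aa / (1 - 1 / \<rho>)" for aa
  have dd_pos: "dd aa > 0" if "aa < k" for aa
    unfolding dd_def using b_pos[OF that] rho1 by (simp add: field_simps)
  have Dlim: "(\<lambda>n. D aa n / T n) \<longlonglongrightarrow> dd aa" if aa: "aa < k" for aa
  proof -
    have rec: "\<forall>n. D aa (Suc n) / T (Suc n) = (T n / T (Suc n)) * (D aa n / T n) + R (Suc n) aa / T (Suc n)"
    proof
      fix n
      have "D aa (Suc n) = D aa n + R (Suc n) aa" unfolding Dfact[OF aa] by simp
      then show "D aa (Suc n) / T (Suc n) = (T n / T (Suc n)) * (D aa n / T n) + R (Suc n) aa / T (Suc n)"
        using Tne[of n] by (simp add: add_divide_distrib)
    qed
    have al: "(\<lambda>n. T n / T (Suc n)) \<longlonglongrightarrow> 1 / \<rho>"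
    proof -
      have "(\<lambda>n. 1 / (T (Suc n) / T n)) \<longlonglongrightarrow> 1 / \<rho>"
        by (rule tendsto_divide[OF tendsto_const Tratio]) (use rho0 in simp)
      then show ?thesis by simp
    qed
    have be: "(\<lambda>n. R (Suc n) aa / T (Suc n)) \<longlonglongrightarrow> bb aa" by (rule LIMSEQ_Suc[OF blim[OF aa]])
    have "(\<lambda>n. D aa n / T n) \<longlonglongrightarrow> bb aa / (1 - 1 / \<rho>)"
      by (rule lin_rec_lim[OF rec al be]) (use rho1 in simp)
    then show ?thesis unfolding dd_def .
  qed
  have Tshift: "(\<lambda>n. T (n + s) / T n) \<longlonglongrightarrow> \<rho> ^ s" for s
  proof (induction s)
    case 0 then show ?case using Tne by simp
  next
    case (Suc s)
    have lim: "(\<lambda>n. (T (Suc (n + s)) / T (n + s)) * (T (n + s) / T n)) \<longlonglongrightarrow> \<rho> * \<rho> ^ s"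
      by (intro tendsto_mult Suc.IH LIMSEQ_ignore_initial_segment[OF Tratio, of s, simplified])
    have eq: "(\<lambda>n. (T (Suc (n + s)) / T (n + s)) * (T (n + s) / T n)) = (\<lambda>n. T (n + Suc s) / T n)"
    proof
      fix n show "(T (Suc (n + s)) / T (n + s)) * (T (n + s) / T n) = T (n + Suc s) / T n"
        using Tne[of "n + s"] by simp
    qed
    show ?case using lim unfolding eq by simp
  qed
  have Tshift_inv: "(\<lambda>n. T n / T (n + s)) \<longlonglongrightarrow> 1 / \<rho> ^ s" for s
  proof -
    have "(\<lambda>n. 1 / (T (n + s) / T n)) \<longlonglongrightarrow> 1 / \<rho> ^ s"
      by (rule tendsto_divide[OF tendsto_const Tshift]) (use rho0 in simp)
    then show ?thesis by simp
  qed
  have part1: "(\<lambda>n. D l n / D i (n + m + 1)) \<longlonglongrightarrow> dd l / (dd i * \<rho> ^ (m + 1))" if l: "l < k" for l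
  proof -
    have Dsh: "(\<lambda>n. D i (n + (m + 1)) / T (n + (m + 1))) \<longlonglongrightarrow> dd i"
      by (rule LIMSEQ_ignore_initial_segment[OF Dlim[OF i]])
    have "(\<lambda>n. (D l n / T n) / ((D i (n + (m + 1)) / T (n + (m + 1))) * (T (n + (m + 1)) / T n)))
        \<longlonglongrightarrow> dd l / (dd i * \<rho> ^ (m + 1))"
      by (intro tendsto_divide tendsto_mult Dlim[OF l] Dsh Tshift) (use dd_pos[OF i] rho0 in simp)
    moreover have "(D l n / T n) / ((D i (n + (m + 1)) / T (n + (m + 1))) * (T (n + (m + 1)) / T n))
        = D l n / D i (n + m + 1)" for n
      using Tne[of n] Tne[of "n + (m + 1)"] Dpos[OF i, of "n + (m + 1)"] by (simp add: field_simps)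
    ultimately show ?thesis by simp
  qed
  have c1: "\<exists>L>0. (\<lambda>n. D j n / D i (n + m + 1)) \<longlonglongrightarrow> L"
    using part1[OF j] dd_pos[OF i] dd_pos[OF j] rho0 by (intro exI[of _ "dd j / (dd i * \<rho> ^ (m + 1))"]) simp
  have c2: "(\<Sum>l<k. lim (\<lambda>n. (K ^\<^sub>m (m+1)) $$ (i,l) * D l n / D i (n + m + 1))) = 1"
  proof -
    have "(\<Sum>l<k. lim (\<lambda>n. (K ^\<^sub>m (m+1)) $$ (i,l) * D l n / D i (n + m + 1)))
        = (\<Sum>l<k. P (m+1) i l * (dd l / (dd i * \<rho> ^ (m + 1))))"
    proof (rule sum.cong)
      fix l assume "l \<in> {..<k}"
      then have l: "l < k" by simp
      have lim: "(\<lambda>n. P (m+1) i l * (D l n / D i (n + m + 1))) \<longlonglongrightarrow> P (m+1) i l * (dd l / (dd i * \<rho> ^ (m + 1)))"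
        by (intro tendsto_mult_left part1[OF l])
      then show "lim (\<lambda>n. (K ^\<^sub>m (m+1)) $$ (i,l) * D l n / D i (n + m + 1)) = P (m+1) i l * (dd l / (dd i * \<rho> ^ (m + 1)))"
      proof -
        have eqf: "(\<lambda>n. P (m+1) i l * D l n / D i (n + m + 1)) = (\<lambda>n. P (m+1) i l * (D l n / D i (n + m + 1)))"
          by simp
        show ?thesis unfolding Kmat[OF i l] eqf by (rule limI[OF lim])
      qed
    qed simp
    also have "\<dots> = (\<Sum>l<k. P (m+1) i l * bb l) / (bb i * \<rho> ^ (m + 1))"
      unfolding sum_divide_distrib
      by (rule sum.cong) (use rho1 b_pos[OF i] in \<open>auto simp: dd_def field_simps\<close>)
    also have "\<dots> = 1" using right_pow[OF i, of "m+1"] b_pos[OF i] rho0 by simp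
    finally show ?thesis .
  qed
  have part2: "(\<lambda>q. (\<Sum>l<q. P (r + l*(m+1) + 1) i jj) / D i (q*(m+1) + r))
      \<longlonglongrightarrow> a jj * (\<rho> - 1) / (\<rho> ^ (m+1) - 1)" if jj: "jj < k" for jj r
  proof -
    define h where "h = m + 1"
    have h0: "h > 0" unfolding h_def by simp
    define N where "N q = (\<Sum>l<q. P (r + l*h + 1) i jj)" for q
    define g where "g n = (P n i jj / R n i) * (R n i / T n) * (T n / T (n + m))" for n
    have glim: "g \<longlonglongrightarrow> a jj * bb i * (1 / \<rho> ^ m)"
      unfolding g_def by (intro tendsto_mult alim[OF jj i] blim[OF i] Tshift_inv)
    have geq: "g n = P n i jj / T (n + m)" for n
      unfolding g_def using Rpos[OF i, of n] Tne[of n] by simp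
    have rec: "\<forall>q. N (Suc q) / T (Suc q * h + r) =
        (T (q * h + r) / T (q * h + r + h)) * (N q / T (q * h + r)) + g (q * h + (r + 1))"
    proof
      fix q
      have e1: "Suc q * h + r = q * h + r + h" by simp
      have e2: "q * h + (r + 1) + m = q * h + r + h" unfolding h_def by simp
      have e3: "r + q * h + 1 = q * h + (r + 1)" by simp
      have "N (Suc q) = N q + P (q * h + (r + 1)) i jj" unfolding N_def using e3 by (simp add: add.commute)
      then show "N (Suc q) / T (Suc q * h + r) =
        (T (q * h + r) / T (q * h + r + h)) * (N q / T (q * h + r)) + g (q * h + (r + 1))"
        unfolding geq e1 e2 using Tne[of "q * h + r"] by (simp add: add_divide_distrib)
    qed
    have al: "(\<lambda>q. T (q * h + r) / T (q * h + r + h)) \<longlonglongrightarrow> 1 / \<rho> ^ h"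
      using subseq_lim[OF Tshift_inv[of h] h0, of r] by (simp add: add.assoc)
    have be: "(\<lambda>q. g (q * h + (r + 1))) \<longlonglongrightarrow> a jj * bb i * (1 / \<rho> ^ m)"
      by (rule subseq_lim[OF glim h0])
    have a0: "\<bar>1 / \<rho> ^ h\<bar> < 1" using rho1 h0 by simp
    have Slim: "(\<lambda>q. N q / T (q * h + r)) \<longlonglongrightarrow> (a jj * bb i * (1 / \<rho> ^ m)) / (1 - 1 / \<rho> ^ h)"
      by (rule lin_rec_lim[OF rec al be a0])
    have Dsub: "(\<lambda>q. D i (q * h + r) / T (q * h + r)) \<longlonglongrightarrow> dd i"
      by (rule subseq_lim[OF Dlim[OF i] h0])
    have lim: "(\<lambda>q. (N q / T (q * h + r)) / (D i (q * h + r) / T (q * h + r)))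
        \<longlonglongrightarrow> ((a jj * bb i * (1 / \<rho> ^ m)) / (1 - 1 / \<rho> ^ h)) / dd i"
      by (rule tendsto_divide[OF Slim Dsub]) (use dd_pos[OF i] in simp)
    have val: "((a jj * bb i * (1 / \<rho> ^ m)) / (1 - 1 / \<rho> ^ h)) / dd i = a jj * (\<rho> - 1) / (\<rho> ^ (m+1) - 1)"
    proof -
      have X: "\<rho> ^ m > 0" using rho0 by simp
      have Y: "\<rho> * \<rho> ^ m > 1" using rho1 one_less_power[OF rho1, of "Suc m"] by simp
      have B: "bb i > 0" by (rule b_pos[OF i])
      show ?thesis unfolding dd_def h_def using X Y B rho1
        by (simp add: field_simps)
    qed
    have eqf: "(\<lambda>q. (N q / T (q * h + r)) / (D i (q * h + r) / T (q * h + r))) =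
        (\<lambda>q. (\<Sum>l<q. P (r + l*(m+1) + 1) i jj) / D i (q*(m+1) + r))"
    proof
      fix q show "(N q / T (q * h + r)) / (D i (q * h + r) / T (q * h + r)) =
        (\<Sum>l<q. P (r + l*(m+1) + 1) i jj) / D i (q*(m+1) + r)"
        unfolding N_def h_def using Tne[of "q * (m + 1) + r"] by simp
    qed
    show ?thesis using lim unfolding eqf val .
  qed
  have Ksum: "(\<Sum>l<q. (K ^\<^sub>m (r + l*(m+1) + 1)) $$ (i,jj)) = (\<Sum>l<q. P (r + l*(m+1) + 1) i jj)"
    if "jj < k" for q r jj
    unfolding Kmat[OF i that] ..
  have c3: "\<exists>\<gamma>>0. \<forall>r. (\<lambda>q. (\<Sum>l<q. (K ^\<^sub>m (r + l*(m+1) + 1)) $$ (i,j)) / D i (q*(m+1) + r))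
              \<longlonglongrightarrow> \<gamma> / (lam ^ (m+1) - 1)"
  proof (intro exI[of _ "a j * (\<rho> - 1)"] conjI allI)
    show "a j * (\<rho> - 1) > 0" using a_pos[OF j] rho1 by simp
    fix r
    show "(\<lambda>q. (\<Sum>l<q. (K ^\<^sub>m (r + l*(m+1) + 1)) $$ (i,j)) / D i (q*(m+1) + r))
              \<longlonglongrightarrow> a j * (\<rho> - 1) / (lam ^ (m+1) - 1)"
      unfolding Ksum[OF j] lam using part2[OF j] .
  qed
  have aR: "(\<Sum>jj<k. a jj * R t jj) = \<rho> ^ t" for t
  proof -
    have "(\<Sum>jj<k. a jj * R t jj) = (\<Sum>jj<k. \<Sum>b<k. a jj * P t jj b)"
      unfolding R_def by (simp add: sum_distrib_left)
    also have "\<dots> = (\<Sum>b<k. \<Sum>jj<k. a jj * P t jj b)" by (rule sum.swap)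
    also have "\<dots> = (\<Sum>b<k. \<rho> ^ t * a b)" by (rule sum.cong) (use left_pow in auto)
    also have "\<dots> = \<rho> ^ t" using a_sum by (simp add: sum_distrib_left[symmetric])
    finally show ?thesis .
  qed
  have aD: "(\<Sum>jj<k. a jj * D jj m) = (\<rho> ^ (m+1) - 1) / (\<rho> - 1)"
  proof -
    have "(\<Sum>jj<k. a jj * D jj m) = (\<Sum>jj<k. \<Sum>t\<le>m. a jj * R t jj)"
      by (rule sum.cong) (auto simp: Dfact sum_distrib_left)
    also have "\<dots> = (\<Sum>t\<le>m. \<Sum>jj<k. a jj * R t jj)" by (rule sum.swap)
    also have "\<dots> = (\<Sum>t<Suc m. \<rho> ^ t)" unfolding aR lessThan_Suc_atMost ..
    also have "\<dots> = (1 - \<rho> ^ Suc m) / (1 - \<rho>)" unfolding sum_gp_strict using rho1 by simp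
    also have "\<dots> = (\<rho> ^ (m+1) - 1) / (\<rho> - 1)" using rho1 by (simp add: field_simps)
    finally show ?thesis .
  qed
  have c4: "\<forall>r. (\<Sum>j'<k. lim (\<lambda>q. (\<Sum>l<q. (K ^\<^sub>m (r + l*(m+1) + 1)) $$ (i,j')) * D j' m
                              / D i (q*(m+1) + r))) = 1"
  proof
    fix r
    have "(\<Sum>j'<k. lim (\<lambda>q. (\<Sum>l<q. (K ^\<^sub>m (r + l*(m+1) + 1)) $$ (i,j')) * D j' m
                              / D i (q*(m+1) + r)))
        = (\<Sum>j'<k. D j' m * (a j' * (\<rho> - 1) / (\<rho> ^ (m+1) - 1)))"
    proof (rule sum.cong)
      fix j' assume "j' \<in> {..<k}"
      then have j': "j' < k" by simp
      have lim: "(\<lambda>q. D j' m * ((\<Sum>l<q. P (r + l*(m+1) + 1) i j') / D i (q*(m+1) + r)))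
          \<longlonglongrightarrow> D j' m * (a j' * (\<rho> - 1) / (\<rho> ^ (m+1) - 1))"
        by (intro tendsto_mult_left part2[OF j'])
      have eqf: "(\<lambda>q. (\<Sum>l<q. P (r + l*(m+1) + 1) i j') * D j' m / D i (q*(m+1) + r)) =
          (\<lambda>q. D j' m * ((\<Sum>l<q. P (r + l*(m+1) + 1) i j') / D i (q*(m+1) + r)))"
        by (simp add: mult.commute)
      show "lim (\<lambda>q. (\<Sum>l<q. (K ^\<^sub>m (r + l*(m+1) + 1)) $$ (i,j')) * D j' m / D i (q*(m+1) + r))
          = D j' m * (a j' * (\<rho> - 1) / (\<rho> ^ (m+1) - 1))"
        unfolding Ksum[OF j'] eqf by (rule limI[OF lim])
    qed simp
    also have "\<dots> = (\<Sum>j'<k. (\<rho> - 1) / (\<rho> ^ (m+1) - 1) * (a j' * D j' m))"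
      by (rule sum.cong) (simp_all add: mult_ac)
    also have "\<dots> = (\<rho> - 1) / (\<rho> ^ (m+1) - 1) * (\<Sum>j'<k. a j' * D j' m)"
      by (rule sum_distrib_left[symmetric])
    also have "\<dots> = 1" unfolding aD
    proof -
      have "\<rho> ^ (m+1) > 1" using one_less_power[OF rho1, of "m+1"] by simp
      then show "(\<rho> - 1) / (\<rho> ^ (m+1) - 1) * ((\<rho> ^ (m+1) - 1) / (\<rho> - 1)) = 1"
        using rho1 by simp
    qed
    finally show "(\<Sum>j'<k. lim (\<lambda>q. (\<Sum>l<q. (K ^\<^sub>m (r + l*(m+1) + 1)) $$ (i,j')) * D j' m
                              / D i (q*(m+1) + r))) = 1" .
  qed
  show ?thesis using c1 c2 c3 c4 by blast
qed

end
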